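(* Let $m\ge 2$, let $f(t)=t^m-\sum_{s=0}^{m-1}u_{m-s}t^s$ with $u_1,\dots,u_m\in\mathbb{Q}$ have $m$ distinct roots $\alpha_1,\dots,\alpha_m$, let $V$ be the Vandermonde matrix $V_{s,j}=\alpha_s^{\,j-1}$, let $\mathbf{x}=(x_0,\dots,x_{m-1})\in\mathbb{Q}^m$, $M=\sum_{n=0}^{m-1}x_nA^n$ with $A$ the companion matrix of $f$, and $\gamma_s=\sum_{i=0}^{m-1}x_i\alpha_s^i$. Fix $k\in\{1,\dots,m\}$ and indices $i,j,p,q\in\{1,\dots,m\}$, $(i,j)\ne(p,q)$, and set $A_s=(V^{-1})_{i,s}V_{s,j}$, $B_s=(V^{-1})_{p,s}V_{s,q}$ for $s=1,\dots,m$, with $B_k\neq0$, and $L=A_k/B_k$. Suppose $$0<c^{-1}(\mathbf{x},\alpha_k):=\max\left\{\frac{|\gamma_s|}{|\gamma_k|}: s\ne k\right\}<1,$$ let $l\neq k$ be an index with $c^{-1}(\mathbf{x},\alpha_k)=|\gamma_l|/|\gamma_k|$, and assume $A_lB_k-A_kB_l\neq 0$. Then there is a constant $C>0$ such that for all sufficiently large $n$, $$\left|\frac{M^n_{i,j}}{M^n_{p,q}}-L\right|\le C\,\bigl(c^{-1}(\mathbf{x},\alpha_k)\bigr)^n,$$ i.e. the error is $O\bigl((c^{-1}(\mathbf{x},\alpha_k))^n\bigr)$.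
   Context: The companion matrix $A=(A_{a,b})$ of $f(t)=t^m-\sum_{s=0}^{m-1}u_{m-s}t^s$ is the $m\times m$ matrix with $A_{a+1,a}=1$ for $a=1,\dots,m-1$, last column $(A_{1,m},\dots,A_{m,m})^T=(u_m,u_{m-1},\dots,u_1)^T$, and all other entries $0$. $M^n_{a,b}$ denotes the $(a,b)$-entry of the $n$-th power of $M$; $(V^{-1})_{a,b}$ denotes the $(a,b)$-entry of the inverse of $V$. *)

theory Defs
  imports "Jordan_Normal_Form.Gauss_Jordan_Elimination" "HOL-Computational_Algebra.Polynomial"
begin

text \<open>Indices are 0-based: paper index a in 1..m corresponds to a-1 in 0..<m.\<close>

text \<open>Companion matrix of t^m - sum_{s<m} u_{m-s} t^s (over the complex numbers).
  Paper: A_{a+1,a} = 1, last column (u_m,...,u_1)^T.\<close>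
definition companion_mat :: "nat \<Rightarrow> (nat \<Rightarrow> complex) \<Rightarrow> complex mat" where
  "companion_mat m u = mat m m (\<lambda>(a,b).
     if b = m - 1 then u (m - a) else if a = b + 1 then 1 else 0)"

definition char_poly_u :: "nat \<Rightarrow> (nat \<Rightarrow> complex) \<Rightarrow> complex poly" where
  "char_poly_u m u = monom 1 m - (\<Sum>s<m. monom (u (m - s)) s)"

definition vandermonde :: "nat \<Rightarrow> (nat \<Rightarrow> complex) \<Rightarrow> complex mat" where
  "vandermonde m \<alpha> = mat m m (\<lambda>(s,j). \<alpha> s ^ j)"

definition poly_in_mat :: "nat \<Rightarrow> (nat \<Rightarrow> complex) \<Rightarrow> complex mat \<Rightarrow> complex mat" where
  "poly_in_mat m x A = mat m m (\<lambda>(a,b). \<Sum>n<m. x n * (A ^\<^sub>m n) $$ (a,b))"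

definition gam :: "nat \<Rightarrow> (nat \<Rightarrow> complex) \<Rightarrow> (nat \<Rightarrow> complex) \<Rightarrow> nat \<Rightarrow> complex" where
  "gam m x \<alpha> s = (\<Sum>t<m. x t * \<alpha> s ^ t)"

definition vcoef :: "nat \<Rightarrow> (nat \<Rightarrow> complex) \<Rightarrow> nat \<Rightarrow> nat \<Rightarrow> nat \<Rightarrow> complex" where
  "vcoef m \<alpha> a b s = the (mat_inverse (vandermonde m \<alpha>)) $$ (a, s) * vandermonde m \<alpha> $$ (s, b)"

definition cinv :: "nat \<Rightarrow> (nat \<Rightarrow> complex) \<Rightarrow> (nat \<Rightarrow> complex) \<Rightarrow> nat \<Rightarrow> real" where
  "cinv m x \<alpha> k = Max {cmod (gam m x \<alpha> s) / cmod (gam m x \<alpha> k) | s. s < m \<and> s \<noteq> k}"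

end

theory Submission imports Defs "Jordan_Normal_Form.Determinant" begin

lemma mult_entry:
  assumes "A \<in> carrier_mat m m" "B \<in> carrier_mat m m" "s < m" "b < m"
  shows "(A * B) $$ (s,b) = (\<Sum>a<m. A $$ (s,a) * B $$ (a,b))"
  using assms by (auto simp: scalar_prod_def lessThan_atLeast0 intro!: sum.cong)

lemma eig_pow:
  assumes X: "(X::complex mat) \<in> carrier_mat m m" and V: "V \<in> carrier_mat m m"
    and h: "\<And>s b. s<m \<Longrightarrow> b<m \<Longrightarrow> (V*X)$$(s,b) = lam s * V$$(s,b)"
  shows "s<m \<Longrightarrow> b<m \<Longrightarrow> (V * X ^\<^sub>m n)$$(s,b) = lam s ^ n * V$$(s,b)"
proof (induction n arbitrary: b)
  case 0
  then show ?case using X V by simp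
next
  case (Suc n)
  have "V * X ^\<^sub>m Suc n = (V * X ^\<^sub>m n) * X"
    using X V by (simp add: assoc_mult_mat[symmetric, of V m m "X ^\<^sub>m n" m X m])
  hence "(V * X ^\<^sub>m Suc n) $$ (s,b) = (\<Sum>a<m. (V * X ^\<^sub>m n) $$ (s,a) * X $$ (a,b))"
    using mult_entry[OF _ X Suc.prems, of "V * X ^\<^sub>m n"] X V by simp
  also have "\<dots> = (\<Sum>a<m. lam s ^ n * (V $$ (s,a) * X $$ (a,b)))"
    using Suc by (intro sum.cong) (auto simp: mult.assoc)
  also have "\<dots> = lam s ^ n * (V * X) $$ (s,b)"
    using mult_entry[OF V X Suc.prems] by (simp add: sum_distrib_left)
  also have "\<dots> = lam s ^ Suc n * V $$ (s,b)" using h Suc by simp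
  finally show ?case .
qed

lemma ratio_bound:
  fixes a b g :: "nat \<Rightarrow> complex" and c :: real
  assumes k: "k<m" and bk: "b k \<noteq> 0" and gk: "g k \<noteq> 0" and c0: "0<c" and c1: "c<1"
    and le: "\<And>s. s<m \<Longrightarrow> s\<noteq>k \<Longrightarrow> cmod (g s) / cmod (g k) \<le> c"
  shows "\<exists>C>0. \<forall>\<^sub>F n in sequentially.
     cmod ((\<Sum>s<m. a s * g s^n)/(\<Sum>s<m. b s * g s^n) - a k / b k) \<le> C * c^n"
proof -
  define r where "r s = g s / g k" for s
  define e where "e s = a s * b k - a k * b s" for s
  define E where "E = (\<Sum>s<m. cmod (e s))"
  define Bs where "Bs = (\<Sum>s<m. cmod (b s))"
  define C where "C = 2 * E / (cmod (b k))^2 + 1"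
  have E0: "E \<ge> 0" unfolding E_def by (intro sum_nonneg) auto
  have bkpos: "cmod (b k) > 0" using bk by simp
  have C0: "C > 0" unfolding C_def using E0 bkpos by (simp add: add_nonneg_pos)
  have rle: "cmod (r s) ^ n \<le> c ^ n" if "s<m" "s\<noteq>k" for s n
    using le[OF that] unfolding r_def by (intro power_mono) (auto simp: norm_divide)
  have rk: "r k = 1" using gk by (simp add: r_def)
  have "(\<lambda>n. Bs * c^n) \<longlonglongrightarrow> Bs * 0"
    by (intro tendsto_mult tendsto_const LIMSEQ_power_zero) (use c0 c1 in auto)
  hence ev: "\<forall>\<^sub>F n in sequentially. Bs * c^n < cmod (b k) / 2"
    using bkpos by (intro order_tendstoD(2)) auto
  have "\<forall>\<^sub>F n in sequentially.
     cmod ((\<Sum>s<m. a s * g s^n)/(\<Sum>s<m. b s * g s^n) - a k / b k) \<le> C * c^n"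
    using ev
  proof eventually_elim
    case (elim n)
    define Nn where "Nn = (\<Sum>s<m. a s * r s^n)"
    define Pn where "Pn = (\<Sum>s<m. b s * r s^n)"
    have gs: "g s ^ n = g k ^ n * r s ^ n" for s
      using gk by (simp add: r_def power_divide)
    have N: "(\<Sum>s<m. a s * g s^n) = g k ^ n * Nn"
      unfolding Nn_def sum_distrib_left
    proof (intro sum.cong refl)
      fix s show "a s * g s ^ n = g k ^ n * (a s * r s ^ n)" unfolding gs[of s] by (simp add: mult_ac)
    qed
    have P: "(\<Sum>s<m. b s * g s^n) = g k ^ n * Pn"
      unfolding Pn_def sum_distrib_left
    proof (intro sum.cong refl)
      fix s show "b s * g s ^ n = g k ^ n * (b s * r s ^ n)" unfolding gs[of s] by (simp add: mult_ac)
    qed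
    have Pn_split: "Pn = b k + (\<Sum>s\<in>{..<m}-{k}. b s * r s^n)"
      unfolding Pn_def using k rk by (simp add: sum.remove)
    have "cmod (\<Sum>s\<in>{..<m}-{k}. b s * r s^n) \<le> (\<Sum>s\<in>{..<m}-{k}. cmod (b s) * c^n)"
      by (rule order_trans[OF norm_sum], intro sum_mono)
         (auto simp: norm_mult norm_power intro!: mult_left_mono rle)
    also have "\<dots> \<le> (\<Sum>s<m. cmod (b s) * c^n)"
      by (intro sum_mono2) (use c0 in auto)
    also have "\<dots> = Bs * c^n" by (simp add: Bs_def sum_distrib_right)
    finally have rest: "cmod (\<Sum>s\<in>{..<m}-{k}. b s * r s^n) < cmod (b k) / 2" using elim by linarith
    have Pn_ge: "cmod Pn \<ge> cmod (b k) / 2"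
      using Pn_split rest norm_triangle_ineq2[of "b k" "- (\<Sum>s\<in>{..<m}-{k}. b s * r s^n)"]
      by simp
    hence Pn0: "Pn \<noteq> 0" using bkpos by auto
    have gkn: "g k ^ n \<noteq> 0" using gk by simp
    have eq: "(\<Sum>s<m. a s * g s^n)/(\<Sum>s<m. b s * g s^n) - a k / b k
        = (\<Sum>s<m. e s * r s^n) / (Pn * b k)"
    proof -
      have "(\<Sum>s<m. e s * r s^n) = Nn * b k - a k * Pn"
        unfolding e_def Nn_def Pn_def
        by (simp add: algebra_simps sum_subtractf sum_distrib_left sum_distrib_right)
      thus ?thesis unfolding N P using gkn Pn0 bk by (simp add: field_simps)
    qed
    have num: "cmod (\<Sum>s<m. e s * r s^n) \<le> E * c^n"
    proof -
      have "cmod (\<Sum>s<m. e s * r s^n) \<le> (\<Sum>s<m. cmod (e s) * c^n)"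
      proof (rule order_trans[OF norm_sum], intro sum_mono)
        fix s assume s: "s \<in> {..<m}"
        show "cmod (e s * r s ^ n) \<le> cmod (e s) * c ^ n"
        proof (cases "s = k")
          case True thus ?thesis by (simp add: e_def)
        next
          case False thus ?thesis using s rle
            by (auto simp: norm_mult norm_power intro!: mult_left_mono)
        qed
      qed
      thus ?thesis by (simp add: E_def sum_distrib_right)
    qed
    have "cmod ((\<Sum>s<m. e s * r s^n) / (Pn * b k)) = cmod (\<Sum>s<m. e s * r s^n) / (cmod Pn * cmod (b k))"
      by (simp add: norm_divide norm_mult)
    also have "\<dots> \<le> E * c^n / (cmod (b k) / 2 * cmod (b k))"
      using num Pn_ge bkpos E0 c0
      by (intro frac_le mult_right_mono mult_pos_pos) auto
    also have "\<dots> = (2 * E / (cmod (b k))^2) * c^n"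
      using bkpos by (simp add: power2_eq_square field_simps)
    also have "\<dots> \<le> C * c^n" unfolding C_def using c0 by (simp add: distrib_right)
    finally show ?case unfolding eq .
  qed
  thus ?thesis using C0 by blast
qed


lemma vander_det:
  assumes inj: "inj_on \<alpha> {..<m}"
  shows "det (vandermonde m \<alpha>) \<noteq> 0"
proof
  let ?V = "vandermonde m \<alpha>"
  have V: "?V \<in> carrier_mat m m" by (simp add: vandermonde_def)
  assume "det ?V = 0"
  then obtain v where v: "v \<in> carrier_vec m" "v \<noteq> 0\<^sub>v m" "?V *\<^sub>v v = 0\<^sub>v m"
    using det_0_iff_vec_prod_zero[OF V] by auto
  define p where "p = (\<Sum>j<m. monom (v $ j) j)"
  have deg: "degree p < m" if "m > 0"
  proof -
    have "degree p \<le> m - 1"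
      by (rule degree_le) (auto simp: p_def coeff_sum coeff_monom)
    thus ?thesis using that by linarith
  qed
  have root: "poly p (\<alpha> s) = 0" if "s < m" for s
  proof -
    have "(?V *\<^sub>v v) $ s = 0" using v(3) that by simp
    hence "(\<Sum>j<m. \<alpha> s ^ j * v $ j) = 0"
      using that v(1) by (simp add: vandermonde_def scalar_prod_def lessThan_atLeast0)
    thus ?thesis unfolding p_def by (simp add: poly_sum poly_monom mult.commute)
  qed
  have "p = 0"
  proof (cases "m = 0")
    case True thus ?thesis by (simp add: p_def)
  next
    case False
    have c: "card (\<alpha> ` {..<m}) = m" using card_image[OF inj] by simp
    show ?thesis
      by (rule poly_eqI_degree[of "\<alpha> ` {..<m}"]) (use root deg False c in auto)
  qed
  hence "coeff p j = 0" for j by simp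
  moreover have "coeff p j = v $ j" if "j < m" for j
    unfolding p_def using that by (simp add: coeff_sum coeff_monom)
  ultimately have "v = 0\<^sub>v m" using v(1) by (intro eq_vecI) auto
  with v(2) show False by simp
qed



theorem theorem2:
  fixes m :: nat and u x :: "nat \<Rightarrow> rat" and \<alpha> :: "nat \<Rightarrow> complex"
    and k i j p q l :: nat
  defines "f \<equiv> char_poly_u m (\<lambda>s. of_rat (u s))"
    and "M \<equiv> poly_in_mat m (\<lambda>s. of_rat (x s)) (companion_mat m (\<lambda>s. of_rat (u s)))"
    and "\<gamma> \<equiv> gam m (\<lambda>s. of_rat (x s)) \<alpha>"
    and "As \<equiv> vcoef m \<alpha> i j"
    and "Bs \<equiv> vcoef m \<alpha> p q"
    and "c \<equiv> cinv m (\<lambda>s. of_rat (x s)) \<alpha> k"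
  assumes "m \<ge> 2"
    and roots: "\<And>s. s < m \<Longrightarrow> poly f (\<alpha> s) = 0"
    and distinct: "inj_on \<alpha> {..<m}"
    and "k < m" and "i < m" and "j < m" and "p < m" and "q < m"
    and "(i, j) \<noteq> (p, q)"
    and "Bs k \<noteq> 0"
    and "0 < c" and "c < 1"
    and "l < m" and "l \<noteq> k" and "c = cmod (\<gamma> l) / cmod (\<gamma> k)"
    and "As l * Bs k - As k * Bs l \<noteq> 0"
  shows "\<exists>C>0. \<forall>\<^sub>F n in sequentially.
           cmod ((M ^\<^sub>m n) $$ (i, j) / (M ^\<^sub>m n) $$ (p, q) - As k / Bs k) \<le> C * c ^ n"
proof -
  define uc where "uc = (\<lambda>s. (of_rat (u s) :: complex))"
  define xc where "xc = (\<lambda>s. (of_rat (x s) :: complex))"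
  define V where "V = vandermonde m \<alpha>"
  define A where "A = companion_mat m uc"
  have V: "V \<in> carrier_mat m m" by (simp add: V_def vandermonde_def)
  have A: "A \<in> carrier_mat m m" by (simp add: A_def companion_mat_def)
  have M: "M \<in> carrier_mat m m" by (simp add: M_def poly_in_mat_def)
  have Mdef: "M = poly_in_mat m xc A" unfolding M_def xc_def A_def uc_def ..
  have root: "\<alpha> s ^ m = (\<Sum>a<m. uc (m - a) * \<alpha> s ^ a)" if "s < m" for s
    using roots[OF that] unfolding f_def char_poly_u_def uc_def
    by (simp add: poly_sum poly_monom)
  have VA: "(V * A) $$ (s,b) = \<alpha> s * V $$ (s,b)" if s: "s<m" "b<m" for s b
  proof -
    have "(V * A) $$ (s,b) = (\<Sum>a<m. \<alpha> s ^ a * A $$ (a,b))"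
      using mult_entry[OF V A s] s by (simp add: V_def vandermonde_def)
    also have "\<dots> = \<alpha> s ^ Suc b"
    proof (cases "b = m - 1")
      case True
      have "(\<Sum>a<m. \<alpha> s ^ a * A $$ (a,b)) = (\<Sum>a<m. uc (m - a) * \<alpha> s ^ a)"
        using True by (intro sum.cong) (auto simp: A_def companion_mat_def)
      also have "\<dots> = \<alpha> s ^ Suc b" using root[OF s(1)] True s by simp
      finally show ?thesis .
    next
      case False
      have "(\<Sum>a<m. \<alpha> s ^ a * A $$ (a,b)) = (\<Sum>a<m. if a = Suc b then \<alpha> s ^ a else 0)"
        using False s by (intro sum.cong) (auto simp: A_def companion_mat_def)
      also have "\<dots> = \<alpha> s ^ Suc b" using False s by simp
      finally show ?thesis .
    qed
    also have "\<dots> = \<alpha> s * V $$ (s,b)" using s by (simp add: V_def vandermonde_def)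
    finally show ?thesis .
  qed
  have VAn: "(V * A ^\<^sub>m n) $$ (s,b) = \<alpha> s ^ n * V $$ (s,b)" if "s<m" "b<m" for s b n
    by (rule eig_pow[OF A V VA that])
  have VM: "(V * M) $$ (s,b) = \<gamma> s * V $$ (s,b)" if s: "s<m" "b<m" for s b
  proof -
    have "(V * M) $$ (s,b) = (\<Sum>a<m. V $$ (s,a) * (\<Sum>n<m. xc n * (A ^\<^sub>m n) $$ (a,b)))"
      using mult_entry[OF V M s] s by (simp add: Mdef poly_in_mat_def)
    also have "\<dots> = (\<Sum>n<m. xc n * (\<Sum>a<m. V $$ (s,a) * (A ^\<^sub>m n) $$ (a,b)))"
      unfolding sum_distrib_left by (subst sum.swap) (simp add: mult_ac)
    also have "\<dots> = (\<Sum>n<m. xc n * (\<alpha> s ^ n * V $$ (s,b)))"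
      using mult_entry[OF V pow_carrier_mat[OF A] s] VAn[OF s] by simp
    also have "\<dots> = \<gamma> s * V $$ (s,b)"
      by (simp add: \<gamma>_def gam_def xc_def sum_distrib_left mult_ac)
    finally show ?thesis .
  qed
  have VMn: "(V * M ^\<^sub>m n) $$ (s,b) = \<gamma> s ^ n * V $$ (s,b)" if "s<m" "b<m" for s b n
    by (rule eig_pow[OF M V VM that])
  obtain Vi where Vi: "mat_inverse V = Some Vi"
  proof (cases "mat_inverse V")
    case None
    hence "V \<notin> Units (ring_mat TYPE(complex) m ())" by (rule mat_inverse(1)[OF V])
    moreover have "V \<in> Units (ring_mat TYPE(complex) m ())"
      by (rule det_non_zero_imp_unit[OF V]) (use vander_det[OF distinct] in \<open>simp add: V_def\<close>)
    ultimately show ?thesis by simp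
  qed auto
  have ViV: "Vi * V = 1\<^sub>m m" and Vic: "Vi \<in> carrier_mat m m" using mat_inverse(2)[OF V Vi] by auto
  have Mn: "(M ^\<^sub>m n) $$ (a,b) = (\<Sum>s<m. vcoef m \<alpha> a b s * \<gamma> s ^ n)" if ab: "a<m" "b<m" for a b n
  proof -
    have "M ^\<^sub>m n = (Vi * V) * M ^\<^sub>m n" using ViV M by simp
    also have "\<dots> = Vi * (V * M ^\<^sub>m n)" using Vic V M by (simp add: assoc_mult_mat[of _ m m _ m _ m])
    finally have "(M ^\<^sub>m n) $$ (a,b) = (\<Sum>s<m. Vi $$ (a,s) * (V * M ^\<^sub>m n) $$ (s,b))"
      using mult_entry[OF Vic _ ab, of "V * M ^\<^sub>m n"] V M by simp
    also have "\<dots> = (\<Sum>s<m. vcoef m \<alpha> a b s * \<gamma> s ^ n)"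
      using VMn ab by (intro sum.cong) (auto simp: vcoef_def Vi V_def[symmetric] mult_ac)
    finally show ?thesis .
  qed
  have gk: "\<gamma> k \<noteq> 0" using \<open>0 < c\<close> \<open>c = cmod (\<gamma> l) / cmod (\<gamma> k)\<close> by auto
  have fin: "finite {cmod (gam m (\<lambda>s. of_rat (x s)) \<alpha> s) / cmod (gam m (\<lambda>s. of_rat (x s)) \<alpha> k) | s. s < m \<and> s \<noteq> k}"
    by simp
  have le: "cmod (\<gamma> s) / cmod (\<gamma> k) \<le> c" if "s<m" "s\<noteq>k" for s
    unfolding c_def cinv_def \<gamma>_def using that by (intro Max_ge[OF fin]) auto
  have "\<exists>C>0. \<forall>\<^sub>F n in sequentially.
     cmod ((\<Sum>s<m. As s * \<gamma> s^n)/(\<Sum>s<m. Bs s * \<gamma> s^n) - As k / Bs k) \<le> C * c^n"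
    by (rule ratio_bound[where a=As and b=Bs and g=\<gamma>, OF \<open>k<m\<close> \<open>Bs k \<noteq> 0\<close> gk \<open>0<c\<close> \<open>c<1\<close> le])
  moreover have "(M ^\<^sub>m n) $$ (i, j) = (\<Sum>s<m. As s * \<gamma> s^n)" for n
    using Mn \<open>i<m\<close> \<open>j<m\<close> by (simp add: As_def)
  moreover have "(M ^\<^sub>m n) $$ (p, q) = (\<Sum>s<m. Bs s * \<gamma> s^n)" for n
    using Mn \<open>p<m\<close> \<open>q<m\<close> by (simp add: Bs_def)
  ultimately show ?thesis by simp
qed

end
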